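(* Assume $|V|\ge2$ and let $\overline\kappa_0=\inf_{x\ne y}\overline\kappa(x,y)$. If $\mu>0$ and there exists a nonzero $f\in\mathbb{R}^V$ with $\mathcal{L}^0f=\mu f$, then $\overline\kappa_0\le\mu$.
   Context: Let $H=(V,E,w)$ be a weighted hypergraph: $V$ is a finite set, $E$ a set of nonempty subsets of $V$, $w\colon E\to\mathbb{R}_{>0}$. Write $x\sim y$ if some $e\in E$ contains both; $H$ is assumed connected. The degree is $d_x=\sum_{e\ni x}w_e>0$, $D=\mathrm{diag}(d_x)$. The distance $d(x,y)$ is the minimal $n$ with a chain $x=z_0\sim\cdots\sim z_n=y$. $\delta_x$ is the indicator of $x$. $\mathbb{R}^V$ carries the inner product $\langle f,g\rangle=\sum_x f(x)g(x)/d_x$ with norm $\|\cdot\|$. For $e\in E$ let $B_e=\mathrm{Conv}\{\delta_x-\delta_y : x,y\in e\}$. The multivalued hypergraph Laplacian is $L(f)=\{\sum_{e}w_e\mathtt{b}_e(\mathtt{b}_e^\top f) : \mathtt{b}_e\in\operatorname{argmax}_{\mathtt b\in B_e}\mathtt b^\top f\}$ and the normalized Laplacian is $\mathcal{L}f=L(D^{-1}f)$, a maximal monotone operator on $(\mathbb{R}^V,\langle\cdot,\cdot\rangle)$. For $f\in\mathbb{R}^V$, $\mathcal{L}f$ is a nonempty closed convex set and $\mathcal{L}^0f$ denotes its unique element of minimal norm $\|\cdot\|$. For $\lambda>0$ the resolvent $J_\lambda=(I+\lambda\mathcal L)^{-1}$ is a single-valued map $\mathbb{R}^V\to\mathbb{R}^V$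 (equivalently $J_\lambda f=\operatorname{argmin}_g\{\frac{1}{2\lambda}\|f-g\|^2+Q(D^{-1}g)\}$, $Q(g)=\frac12\sum_e w_e\max_{x,y\in e}(g(x)-g(y))^2$). A function $f$ is weighted $1$-Lipschitz if $|f(x)/d_x-f(y)/d_y|\le d(x,y)$ for all $x,y$; $\mathrm{Lip}^1_w(V)$ denotes the set of such functions. $\mathrm{KD}_\lambda(x,y)=\sup\{\langle J_\lambda f,\delta_x-\delta_y\rangle : f\in\mathrm{Lip}^1_w(V)\}$. For $x\ne y$: $\kappa_\lambda(x,y)=1-\mathrm{KD}_\lambda(x,y)/d(x,y)$ and $\overline\kappa(x,y)=\limsup_{\lambda\downarrow0}\kappa_\lambda(x,y)/\lambda$. *)

theory Defs
  imports "HOL-Analysis.Analysis" "HOL-Library.Liminf_Limsup"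
begin

text \<open>Weighted hypergraph on the finite vertex type 'a (V = UNIV), hyperedges E,
  weights w. Functions on V are vectors in real^'a.\<close>

definition hadj :: "'a set set \<Rightarrow> 'a \<Rightarrow> 'a \<Rightarrow> bool" where
  "hadj E x y \<longleftrightarrow> (\<exists>e\<in>E. x \<in> e \<and> y \<in> e)"

definition hconnected :: "'a set set \<Rightarrow> bool" where
  "hconnected E \<longleftrightarrow> (\<forall>x y. \<exists>n. (hadj E ^^ n) x y)"

definition hdist :: "'a set set \<Rightarrow> 'a \<Rightarrow> 'a \<Rightarrow> nat" where
  "hdist E x y = (LEAST n. (hadj E ^^ n) x y)"

definition hdeg :: "'a set set \<Rightarrow> ('a set \<Rightarrow> real) \<Rightarrow> 'a \<Rightarrow> real" where
  "hdeg E w x = (\<Sum>e\<in>{e\<in>E. x \<in> e}. w e)"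

definition delta :: "'a::finite \<Rightarrow> real^'a" where
  "delta x = (\<chi> y. if y = x then 1 else 0)"

definition winner :: "'a set set \<Rightarrow> ('a set \<Rightarrow> real) \<Rightarrow> real^'a::finite \<Rightarrow> real^'a \<Rightarrow> real" where
  "winner E w f g = (\<Sum>x\<in>UNIV. f $ x * g $ x / hdeg E w x)"

definition wnorm :: "'a set set \<Rightarrow> ('a set \<Rightarrow> real) \<Rightarrow> real^'a::finite \<Rightarrow> real" where
  "wnorm E w f = sqrt (winner E w f f)"

definition Bset :: "'a::finite set \<Rightarrow> (real^'a) set" where
  "Bset e = convex hull {delta x - delta y | x y. x \<in> e \<and> y \<in> e}"

definition argmaxB :: "'a::finite set \<Rightarrow> real^'a \<Rightarrow> (real^'a) set" where
  "argmaxB e f = {b \<in> Bset e. \<forall>b'\<in>Bset e. b' \<bullet> f \<le> b \<bullet> f}"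

definition hLap :: "'a::finite set set \<Rightarrow> ('a set \<Rightarrow> real) \<Rightarrow> real^'a \<Rightarrow> (real^'a) set" where
  "hLap E w f = {(\<Sum>e\<in>E. w e *\<^sub>R ((b e \<bullet> f) *\<^sub>R b e)) | b. \<forall>e\<in>E. b e \<in> argmaxB e f}"

definition Dinv :: "'a set set \<Rightarrow> ('a set \<Rightarrow> real) \<Rightarrow> real^'a::finite \<Rightarrow> real^'a" where
  "Dinv E w f = (\<chi> x. f $ x / hdeg E w x)"

definition nLap :: "'a::finite set set \<Rightarrow> ('a set \<Rightarrow> real) \<Rightarrow> real^'a \<Rightarrow> (real^'a) set" where
  "nLap E w f = hLap E w (Dinv E w f)"

definition nLap0 :: "'a::finite set set \<Rightarrow> ('a set \<Rightarrow> real) \<Rightarrow> real^'a \<Rightarrow> real^'a" where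
  "nLap0 E w f = (THE g. g \<in> nLap E w f \<and> (\<forall>h\<in>nLap E w f. wnorm E w g \<le> wnorm E w h))"

definition resolvent :: "'a::finite set set \<Rightarrow> ('a set \<Rightarrow> real) \<Rightarrow> real \<Rightarrow> real^'a \<Rightarrow> real^'a" where
  "resolvent E w lam f = (THE g. \<exists>h\<in>nLap E w g. f = g + lam *\<^sub>R h)"

definition wLip1 :: "'a set set \<Rightarrow> ('a set \<Rightarrow> real) \<Rightarrow> real^'a::finite \<Rightarrow> bool" where
  "wLip1 E w f \<longleftrightarrow> (\<forall>x y. \<bar>f $ x / hdeg E w x - f $ y / hdeg E w y\<bar> \<le> real (hdist E x y))"

definition KD :: "'a::finite set set \<Rightarrow> ('a set \<Rightarrow> real) \<Rightarrow> real \<Rightarrow> 'a \<Rightarrow> 'a \<Rightarrow> real" where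
  "KD E w lam x y = Sup {winner E w (resolvent E w lam f) (delta x - delta y) | f. wLip1 E w f}"

definition kappa :: "'a::finite set set \<Rightarrow> ('a set \<Rightarrow> real) \<Rightarrow> real \<Rightarrow> 'a \<Rightarrow> 'a \<Rightarrow> real" where
  "kappa E w lam x y = 1 - KD E w lam x y / real (hdist E x y)"

definition kappa_bar :: "'a::finite set set \<Rightarrow> ('a set \<Rightarrow> real) \<Rightarrow> 'a \<Rightarrow> 'a \<Rightarrow> ereal" where
  "kappa_bar E w x y = Limsup (at_right 0) (\<lambda>lam. ereal (kappa E w lam x y / lam))"

definition kappa_bar0 :: "'a::finite set set \<Rightarrow> ('a set \<Rightarrow> real) \<Rightarrow> ereal" where
  "kappa_bar0 E w = (INF p\<in>{(x, y). x \<noteq> y}. kappa_bar E w (fst p) (snd p))"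

end

theory Submission
  imports Defs
begin


definition Pset :: "'a::finite set \<Rightarrow> (real^'a) set" where
  "Pset e = {delta x - delta y | x y. x \<in> e \<and> y \<in> e}"

definition mE :: "'a::finite set \<Rightarrow> real^'a \<Rightarrow> real" where
  "mE e v = Max ((\<lambda>b. b \<bullet> v) ` Pset e)"

lemma delta_inner[simp]: "delta x \<bullet> v = v $ x"
proof -
  have "(\<Sum>i\<in>UNIV. (if i = x then 1 else 0) * v $ i) = (\<Sum>i\<in>UNIV. if i = x then v$i else 0)"
    by (rule sum.cong) auto
  thus ?thesis by (simp add: delta_def inner_vec_def)
qed

lemma delta_inner2[simp]: "v \<bullet> delta x = v $ x"
  using delta_inner inner_commute by metis

lemma Pset_finite: "finite (Pset e)"
proof -
  have "Pset e = (\<lambda>(x,y). delta x - delta y) ` (e \<times> e)" unfolding Pset_def by auto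
  thus ?thesis by simp
qed

lemma zero_Pset: "e \<noteq> {} \<Longrightarrow> (0::real^'a::finite) \<in> Pset e"
  unfolding Pset_def by force

lemma mE_ge: "b \<in> Pset e \<Longrightarrow> b \<bullet> v \<le> mE e v"
  unfolding mE_def using Pset_finite by (intro Max_ge) auto

lemma mE_nonneg: "e \<noteq> {} \<Longrightarrow> 0 \<le> mE e v"
proof -
  assume "e \<noteq> {}"
  hence "0 \<in> Pset e" by (rule zero_Pset)
  hence "0 \<bullet> v \<le> mE e v" by (rule mE_ge)
  thus ?thesis by simp
qed

lemma mE_attained: "e \<noteq> {} \<Longrightarrow> \<exists>b\<in>Pset e. b \<bullet> v = mE e v"
proof -
  assume "e \<noteq> {}"
  then have "(\<lambda>b. b \<bullet> v) ` Pset e \<noteq> {}" using zero_Pset by blast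
  from Max_in[OF finite_imageI[OF Pset_finite] this] show ?thesis unfolding mE_def by auto
qed

lemma Bset_le: "b \<in> Bset e \<Longrightarrow> b \<bullet> v \<le> mE e v"
proof -
  have c: "convex {b. b \<bullet> v \<le> mE e v}"
    using convex_halfspace_le[of v "mE e v"] by (simp add: inner_commute)
  have "Bset e \<subseteq> {b. b \<bullet> v \<le> mE e v}"
    unfolding Bset_def Pset_def[symmetric]
    by (rule hull_minimal) (auto simp: c mE_ge)
  thus "b \<in> Bset e \<Longrightarrow> ?thesis" by blast
qed

lemma Bset_sum0: "b \<in> Bset e \<Longrightarrow> b \<bullet> (\<chi> i. 1) = 0"
proof -
  have "Bset e \<subseteq> {b. (\<chi> i. 1) \<bullet> b = 0}"
    unfolding Bset_def Pset_def[symmetric]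
    by (rule hull_minimal) (auto simp: convex_hyperplane Pset_def inner_diff_right)
  thus "b \<in> Bset e \<Longrightarrow> ?thesis" by (metis (mono_tags, lifting) mem_Collect_eq subsetD inner_commute)
qed

lemma Pset_Bset: "Pset e \<subseteq> Bset e"
  unfolding Bset_def Pset_def by (rule hull_subset)

lemma argmaxB_eq: "e \<noteq> {} \<Longrightarrow> b \<in> argmaxB e v \<Longrightarrow> b \<bullet> v = mE e v"
proof -
  assume e: "e \<noteq> {}" and b: "b \<in> argmaxB e v"
  obtain p where p: "p \<in> Pset e" "p \<bullet> v = mE e v" using mE_attained[OF e] by blast
  have "p \<in> Bset e" using p(1) Pset_Bset[of e] by blast
  hence "p \<bullet> v \<le> b \<bullet> v" using b unfolding argmaxB_def by auto
  moreover have "b \<bullet> v \<le> mE e v" using b Bset_le unfolding argmaxB_def by auto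
  ultimately show ?thesis using p by auto
qed

lemma Pset_argmaxB: "e \<noteq> {} \<Longrightarrow> p \<in> Pset e \<Longrightarrow> p \<bullet> v = mE e v \<Longrightarrow> p \<in> argmaxB e v"
  unfolding argmaxB_def using Pset_Bset Bset_le by fastforce

lemma argmaxB_ne: "e \<noteq> {} \<Longrightarrow> \<exists>b. b \<in> argmaxB e v"
  using mE_attained Pset_argmaxB by blast



lemma sumset_cc:
  fixes C :: "'i \<Rightarrow> ('b::euclidean_space) set"
  assumes "finite I" "\<forall>i\<in>I. compact (C i) \<and> convex (C i)"
  shows "compact {\<Sum>i\<in>I. c i | c. \<forall>i\<in>I. c i \<in> C i} \<and> convex {\<Sum>i\<in>I. c i | c. \<forall>i\<in>I. c i \<in> C i}"
  using assms
proof (induction I rule: finite_induct)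
  case empty
  have "{\<Sum>i\<in>{}. c i | c. \<forall>i\<in>{}. c i \<in> C i} = {0}" by auto
  then show ?case by simp
next
  case (insert i I)
  let ?S = "{\<Sum>i\<in>I. c i | c. \<forall>i\<in>I. c i \<in> C i}"
  have eq: "{\<Sum>i\<in>insert i I. c i | c. \<forall>i\<in>insert i I. c i \<in> C i} = {x + y | x y. x \<in> C i \<and> y \<in> ?S}"
  proof
    show "{\<Sum>i\<in>insert i I. c i | c. \<forall>i\<in>insert i I. c i \<in> C i} \<subseteq> {x + y | x y. x \<in> C i \<and> y \<in> ?S}"
    proof
      fix z assume "z \<in> {\<Sum>i\<in>insert i I. c i | c. \<forall>i\<in>insert i I. c i \<in> C i}"
      then obtain c where c: "\<forall>j\<in>insert i I. c j \<in> C j" "z = (\<Sum>j\<in>insert i I. c j)" by blast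
      have "z = c i + (\<Sum>j\<in>I. c j)" using c(2) insert(1,2) by simp
      moreover have "(\<Sum>j\<in>I. c j) \<in> ?S" using c(1) by blast
      ultimately show "z \<in> {x + y | x y. x \<in> C i \<and> y \<in> ?S}" using c(1) by blast
    qed
  next
    show "{x + y | x y. x \<in> C i \<and> y \<in> ?S} \<subseteq> {\<Sum>i\<in>insert i I. c i | c. \<forall>i\<in>insert i I. c i \<in> C i}"
    proof
      fix z assume "z \<in> {x + y | x y. x \<in> C i \<and> y \<in> ?S}"
      then obtain x c where xc: "x \<in> C i" "\<forall>j\<in>I. c j \<in> C j" "z = x + (\<Sum>j\<in>I. c j)" by blast
      define c' where "c' = c(i := x)"
      have "(\<Sum>j\<in>I. c' j) = (\<Sum>j\<in>I. c j)" using insert(2) unfolding c'_def by (intro sum.cong) auto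
      hence "z = (\<Sum>j\<in>insert i I. c' j)" using xc(3) insert(1,2) by (simp add: c'_def)
      moreover have "\<forall>j\<in>insert i I. c' j \<in> C j" using xc(1,2) unfolding c'_def by auto
      ultimately show "z \<in> {\<Sum>i\<in>insert i I. c i | c. \<forall>i\<in>insert i I. c i \<in> C i}" by blast
    qed
  qed
  have IH: "compact ?S" "convex ?S" using insert by auto
  have ci: "compact (C i)" "convex (C i)" using insert(4) by auto
  have "convex (\<Union>x\<in>C i. \<Union>y\<in>?S. {x + y})" by (rule convex_sums[OF ci(2) IH(2)])
  moreover have "(\<Union>x\<in>C i. \<Union>y\<in>?S. {x + y}) = {x + y | x y. x \<in> C i \<and> y \<in> ?S}" by blast
  ultimately show ?case unfolding eq using compact_sums[OF ci(1) IH(1)] by simp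
qed

lemma argmaxB_alt: "e \<noteq> {} \<Longrightarrow> argmaxB e v = Bset e \<inter> {b. b \<bullet> v \<ge> mE e v}"
  using argmaxB_eq[of e _ v] Pset_argmaxB Bset_le unfolding argmaxB_def
  by (auto, smt (verit))

lemma Bset_compact: "compact (Bset e)" "convex (Bset e)"
  unfolding Bset_def Pset_def[symmetric]
  by (auto intro!: finite_imp_compact_convex_hull Pset_finite)

lemma argmaxB_cc: "e \<noteq> {} \<Longrightarrow> compact (argmaxB e v) \<and> convex (argmaxB e v)"
proof -
  assume e: "e \<noteq> {}"
  have c: "closed {b. b \<bullet> v \<ge> mE e v}" "convex {b. b \<bullet> v \<ge> mE e v}"
    using closed_halfspace_ge[of "mE e v" v] convex_halfspace_ge[of "mE e v" v]
    by (simp_all add: inner_commute)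
  show ?thesis unfolding argmaxB_alt[OF e]
    using compact_Int_closed[OF Bset_compact(1) c(1)] convex_Int[OF Bset_compact(2) c(2)] by auto
qed

lemma finite_E: "finite (E :: 'a::finite set set)"
  by (rule finite_subset[OF subset_UNIV]) simp

lemma hLapI: "\<forall>e\<in>E. b e \<in> argmaxB e v \<Longrightarrow> (\<Sum>e\<in>E. w e *\<^sub>R ((b e \<bullet> v) *\<^sub>R b e)) \<in> hLap E w v"
  unfolding hLap_def mem_Collect_eq by (intro exI[of _ b]) simp

lemma hLapE: "h \<in> hLap E w v \<Longrightarrow> \<exists>b. (\<forall>e\<in>E. b e \<in> argmaxB e v) \<and> h = (\<Sum>e\<in>E. w e *\<^sub>R ((b e \<bullet> v) *\<^sub>R b e))"
  unfolding hLap_def mem_Collect_eq by metis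

lemma hLapE2:
  assumes "h \<in> hLap E w v"
  obtains b where "\<forall>e\<in>E. b e \<in> argmaxB e v" "h = (\<Sum>e\<in>E. w e *\<^sub>R ((b e \<bullet> v) *\<^sub>R b e))"
  using hLapE[OF assms] that by metis

lemma hLap_eq:
  assumes hE: "\<forall>e\<in>E. e \<noteq> {}"
  shows "hLap E w v = {\<Sum>e\<in>E. c e | c. \<forall>e\<in>E. c e \<in> (\<lambda>b. (w e * mE e v) *\<^sub>R b) ` argmaxB e v}"
proof
  show "hLap E w v \<subseteq> {\<Sum>e\<in>E. c e | c. \<forall>e\<in>E. c e \<in> (\<lambda>b. (w e * mE e v) *\<^sub>R b) ` argmaxB e v}"
  proof
    fix h assume hh: "h \<in> hLap E w v"
    obtain b where b: "\<forall>e\<in>E. b e \<in> argmaxB e v" "h = (\<Sum>e\<in>E. w e *\<^sub>R ((b e \<bullet> v) *\<^sub>R b e))"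
      by (rule hLapE2[OF hh])
    have "\<forall>e\<in>E. w e *\<^sub>R ((b e \<bullet> v) *\<^sub>R b e) \<in> (\<lambda>b. (w e * mE e v) *\<^sub>R b) ` argmaxB e v"
    proof
      fix e assume e: "e \<in> E"
      have "b e \<bullet> v = mE e v" by (rule argmaxB_eq[OF bspec[OF hE e] bspec[OF b(1) e]])
      hence eq: "w e *\<^sub>R ((b e \<bullet> v) *\<^sub>R b e) = (w e * mE e v) *\<^sub>R b e" by simp
      have "b e \<in> argmaxB e v" by (rule bspec[OF b(1) e])
      thus "w e *\<^sub>R ((b e \<bullet> v) *\<^sub>R b e) \<in> (\<lambda>b. (w e * mE e v) *\<^sub>R b) ` argmaxB e v"
        unfolding eq by (rule imageI)
    qed
    thus "h \<in> {\<Sum>e\<in>E. c e | c. \<forall>e\<in>E. c e \<in> (\<lambda>b. (w e * mE e v) *\<^sub>R b) ` argmaxB e v}"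
      unfolding mem_Collect_eq using b(2) by (intro exI[of _ "\<lambda>e. w e *\<^sub>R ((b e \<bullet> v) *\<^sub>R b e)"]) simp
  qed
next
  show "{\<Sum>e\<in>E. c e | c. \<forall>e\<in>E. c e \<in> (\<lambda>b. (w e * mE e v) *\<^sub>R b) ` argmaxB e v} \<subseteq> hLap E w v"
  proof
    fix h assume "h \<in> {\<Sum>e\<in>E. c e | c. \<forall>e\<in>E. c e \<in> (\<lambda>b. (w e * mE e v) *\<^sub>R b) ` argmaxB e v}"
    then obtain c where c: "\<forall>e\<in>E. c e \<in> (\<lambda>b. (w e * mE e v) *\<^sub>R b) ` argmaxB e v" "h = (\<Sum>e\<in>E. c e)" by blast
    have "\<forall>e\<in>E. \<exists>b. b \<in> argmaxB e v \<and> c e = (w e * mE e v) *\<^sub>R b"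
    proof
      fix e assume e: "e \<in> E"
      obtain b where bb: "c e = (w e * mE e v) *\<^sub>R b" "b \<in> argmaxB e v"
        by (rule imageE[OF bspec[OF c(1) e]])
      show "\<exists>b. b \<in> argmaxB e v \<and> c e = (w e * mE e v) *\<^sub>R b"
        by (rule exI[of _ b]) (simp add: bb)
    qed
    from bchoice[OF this] obtain b where b: "\<forall>e\<in>E. b e \<in> argmaxB e v \<and> c e = (w e * mE e v) *\<^sub>R b e"
      by (elim exE)
    have "\<forall>e\<in>E. c e = w e *\<^sub>R ((b e \<bullet> v) *\<^sub>R b e)"
    proof
      fix e assume e: "e \<in> E"
      have "b e \<bullet> v = mE e v" by (rule argmaxB_eq[OF bspec[OF hE e] conjunct1[OF bspec[OF b e]]])
      thus "c e = w e *\<^sub>R ((b e \<bullet> v) *\<^sub>R b e)" using b e by simp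
    qed
    hence "h = (\<Sum>e\<in>E. w e *\<^sub>R ((b e \<bullet> v) *\<^sub>R b e))" using c(2) by (simp cong: sum.cong)
    moreover have "\<forall>e\<in>E. b e \<in> argmaxB e v" using b by simp
    ultimately show "h \<in> hLap E w v" using hLapI[of E b v w] by simp
  qed
qed

lemma hLap_cc:
  assumes hE: "\<forall>e\<in>E. e \<noteq> {}"
  shows "compact (hLap E w v) \<and> convex (hLap E w v)"
  unfolding hLap_eq[OF hE]
proof (intro sumset_cc finite_E ballI)
  fix e assume e: "e \<in> E"
  have cc: "compact (argmaxB e v)" "convex (argmaxB e v)" using argmaxB_cc[OF bspec[OF hE e], of v] by auto
  show "compact ((\<lambda>b. (w e * mE e v) *\<^sub>R b) ` argmaxB e v) \<and> convex ((\<lambda>b. (w e * mE e v) *\<^sub>R b) ` argmaxB e v)"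
    using compact_scaling[OF cc(1)] convex_scaling[OF cc(2)] by blast
qed

lemma hLap_ne:
  assumes hE: "\<forall>e\<in>E. e \<noteq> {}"
  shows "\<exists>h. h \<in> hLap E w v"
proof -
  have "\<forall>e\<in>E. \<exists>b. b \<in> argmaxB e v"
  proof
    fix e assume e: "e \<in> E"
    show "\<exists>b. b \<in> argmaxB e v" by (rule argmaxB_ne[OF bspec[OF hE e]])
  qed
  from bchoice[OF this] obtain b where "\<forall>e\<in>E. b e \<in> argmaxB e v" by (elim exE)
  hence "(\<Sum>e\<in>E. w e *\<^sub>R ((b e \<bullet> v) *\<^sub>R b e)) \<in> hLap E w v" by (rule hLapI)
  thus ?thesis by (rule exI)
qed

lemma hLap_self:
  assumes hw: "\<forall>e\<in>E. w e > 0" and h: "h \<in> hLap E w v"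
  shows "h \<bullet> v \<ge> 0"
proof -
  obtain b where b: "\<forall>e\<in>E. b e \<in> argmaxB e v" "h = (\<Sum>e\<in>E. w e *\<^sub>R ((b e \<bullet> v) *\<^sub>R b e))"
    by (rule hLapE2[OF h])
  have "h \<bullet> v = (\<Sum>e\<in>E. w e * ((b e \<bullet> v) * (b e \<bullet> v)))"
    using b(2) by (simp add: inner_sum_left mult.assoc)
  also have "\<dots> \<ge> 0" using hw by (intro sum_nonneg) auto
  finally show ?thesis .
qed

lemma hLap_sum0:
  assumes h: "h \<in> hLap E w v"
  shows "h \<bullet> (\<chi> i. 1) = 0"
proof -
  obtain b where b: "\<forall>e\<in>E. b e \<in> argmaxB e v" "h = (\<Sum>e\<in>E. w e *\<^sub>R ((b e \<bullet> v) *\<^sub>R b e))"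
    by (rule hLapE2[OF h])
  have "h \<bullet> (\<chi> i. 1) = (\<Sum>e\<in>E. w e * ((b e \<bullet> v) * (b e \<bullet> (\<chi> i. 1))))"
    using b(2) by (simp add: inner_sum_left mult.assoc)
  also have "\<dots> = 0"
  proof (intro sum.neutral ballI)
    fix e assume e: "e \<in> E"
    have "b e \<in> Bset e" using bspec[OF b(1) e] unfolding argmaxB_def by simp
    hence "b e \<bullet> (\<chi> i. 1) = 0" by (rule Bset_sum0)
    thus "w e * ((b e \<bullet> v) * (b e \<bullet> (\<chi> i. 1))) = 0" by simp
  qed
  finally show ?thesis .
qed

lemma hLap_mono:
  assumes hE: "\<forall>e\<in>E. e \<noteq> {}" and hw: "\<forall>e\<in>E. w e > 0"
    and h1: "h1 \<in> hLap E w v1" and h2: "h2 \<in> hLap E w v2"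
  shows "(h1 - h2) \<bullet> (v1 - v2) \<ge> 0"
proof -
  obtain b1 where b1: "\<forall>e\<in>E. b1 e \<in> argmaxB e v1" "h1 = (\<Sum>e\<in>E. w e *\<^sub>R ((b1 e \<bullet> v1) *\<^sub>R b1 e))"
    by (rule hLapE2[OF h1])
  obtain b2 where b2: "\<forall>e\<in>E. b2 e \<in> argmaxB e v2" "h2 = (\<Sum>e\<in>E. w e *\<^sub>R ((b2 e \<bullet> v2) *\<^sub>R b2 e))"
    by (rule hLapE2[OF h2])
  have "(h1 - h2) \<bullet> (v1 - v2) = h1 \<bullet> v1 - h1 \<bullet> v2 - h2 \<bullet> v1 + h2 \<bullet> v2"
    by (simp add: inner_diff_left inner_diff_right)
  also have "\<dots> = (\<Sum>e\<in>E. w e * ((b1 e \<bullet> v1) * (b1 e \<bullet> v1) - (b1 e \<bullet> v1) * (b1 e \<bullet> v2)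
        - (b2 e \<bullet> v2) * (b2 e \<bullet> v1) + (b2 e \<bullet> v2) * (b2 e \<bullet> v2)))"
    using b1(2) b2(2) by (simp add: inner_sum_left sum_subtractf sum.distrib algebra_simps)
  also have "\<dots> \<ge> 0"
  proof (intro sum_nonneg)
    fix e assume e: "e \<in> E"
    define m1 where "m1 = mE e v1"
    define m2 where "m2 = mE e v2"
    have ne: "e \<noteq> {}" by (rule bspec[OF hE e])
    have B1: "b1 e \<in> argmaxB e v1" by (rule bspec[OF b1(1) e])
    have B2: "b2 e \<in> argmaxB e v2" by (rule bspec[OF b2(1) e])
    have a1: "b1 e \<bullet> v1 = m1" unfolding m1_def by (rule argmaxB_eq[OF ne B1])
    have a2: "b2 e \<bullet> v2 = m2" unfolding m2_def by (rule argmaxB_eq[OF ne B2])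
    have "b1 e \<in> Bset e" using B1 unfolding argmaxB_def by simp
    hence c1: "b1 e \<bullet> v2 \<le> m2" unfolding m2_def by (rule Bset_le)
    have "b2 e \<in> Bset e" using B2 unfolding argmaxB_def by simp
    hence c2: "b2 e \<bullet> v1 \<le> m1" unfolding m1_def by (rule Bset_le)
    have p1: "m1 \<ge> 0" "m2 \<ge> 0" unfolding m1_def m2_def using mE_nonneg[OF ne] by auto
    have "m1 * (b1 e \<bullet> v2) \<le> m1 * m2" using c1 p1 by (simp add: mult_left_mono)
    moreover have "m2 * (b2 e \<bullet> v1) \<le> m2 * m1" using c2 p1 by (simp add: mult_left_mono)
    moreover have "0 \<le> (m1 - m2) * (m1 - m2)" by simp
    ultimately have T: "0 \<le> m1 * m1 - m1 * (b1 e \<bullet> v2) - m2 * (b2 e \<bullet> v1) + m2 * m2"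
      by (simp add: algebra_simps)
    have wpos: "0 < w e" by (rule bspec[OF hw e])
    show "0 \<le> w e * ((b1 e \<bullet> v1) * (b1 e \<bullet> v1) - (b1 e \<bullet> v1) * (b1 e \<bullet> v2)
        - (b2 e \<bullet> v2) * (b2 e \<bullet> v1) + (b2 e \<bullet> v2) * (b2 e \<bullet> v2))"
      unfolding a1 a2 by (rule mult_nonneg_nonneg[OF less_imp_le[OF wpos] T])
  qed
  finally show ?thesis .
qed

lemma hLap_scale:
  assumes c: "c > 0" and h: "h \<in> hLap E w v"
  shows "c *\<^sub>R h \<in> hLap E w (c *\<^sub>R v)"
proof -
  obtain b where b: "\<forall>e\<in>E. b e \<in> argmaxB e v" "h = (\<Sum>e\<in>E. w e *\<^sub>R ((b e \<bullet> v) *\<^sub>R b e))"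
    by (rule hLapE2[OF h])
  have "\<forall>e\<in>E. b e \<in> argmaxB e (c *\<^sub>R v)"
    using b(1) c unfolding argmaxB_def by (auto simp: mult_left_mono)
  moreover have "c *\<^sub>R h = (\<Sum>e\<in>E. w e *\<^sub>R ((b e \<bullet> (c *\<^sub>R v)) *\<^sub>R b e))"
    using b(2) by (simp add: scaleR_sum_right mult.left_commute)
  ultimately show ?thesis using hLapI[of E b "c *\<^sub>R v" w] by simp
qed

lemma hLap_const:
  assumes h: "h \<in> hLap E w (k *\<^sub>R (\<chi> i. 1))"
  shows "h = 0"
proof -
  obtain b where b: "\<forall>e\<in>E. b e \<in> argmaxB e (k *\<^sub>R (\<chi> i. 1))"
      "h = (\<Sum>e\<in>E. w e *\<^sub>R ((b e \<bullet> (k *\<^sub>R (\<chi> i. 1))) *\<^sub>R b e))"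
    by (rule hLapE2[OF h])
  have "\<And>e. e \<in> E \<Longrightarrow> w e *\<^sub>R ((b e \<bullet> (k *\<^sub>R (\<chi> i. 1))) *\<^sub>R b e) = 0"
  proof -
    fix e assume e: "e \<in> E"
    have "b e \<in> Bset e" using bspec[OF b(1) e] unfolding argmaxB_def by simp
    hence "b e \<bullet> (\<chi> i. 1) = 0" by (rule Bset_sum0)
    thus "w e *\<^sub>R ((b e \<bullet> (k *\<^sub>R (\<chi> i. 1))) *\<^sub>R b e) = 0" by simp
  qed
  thus ?thesis using b(2) by (simp add: sum.neutral)
qed



lemma Max_lin_cont:
  fixes A :: "(real^'a::finite) set"
  assumes "finite A" "A \<noteq> {}"
  shows "continuous_on S (\<lambda>v. Max ((\<lambda>b. b \<bullet> v) ` A))"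
  using assms
proof (induction A rule: finite_ne_induct)
  case (singleton x)
  then show ?case by (simp add: continuous_intros)
next
  case (insert x F)
  have "(\<lambda>v. Max ((\<lambda>b. b \<bullet> v) ` insert x F)) = (\<lambda>v. max (x \<bullet> v) (Max ((\<lambda>b. b \<bullet> v) ` F)))"
    using insert by (auto simp: Max_insert)
  then show ?case using insert by (auto intro!: continuous_intros)
qed

lemma mE_cont: "e \<noteq> {} \<Longrightarrow> continuous_on S (\<lambda>v. mE e v)"
  unfolding mE_def using Pset_finite zero_Pset by (intro Max_lin_cont) auto

lemma mE_zero: "e \<noteq> {} \<Longrightarrow> mE e 0 = 0"
proof -
  assume "e \<noteq> {}"
  then have "0 \<in> Pset e" by (rule zero_Pset)
  then have "Pset e \<noteq> {}" by auto
  then have "(\<lambda>b. b \<bullet> (0::real^'a)) ` Pset e = {0}" by auto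
  thus ?thesis unfolding mE_def by simp
qed

lemma max_expand:
  fixes P :: "(real^'a::finite) set"
  assumes fin: "finite P" and ne: "P \<noteq> {}"
  shows "\<exists>\<delta>>0. \<forall>t. 0 < t \<and> t < \<delta> \<longrightarrow>
    Max ((\<lambda>b. b \<bullet> (u + t *\<^sub>R z)) ` P) \<le> Max ((\<lambda>b. b \<bullet> u) ` P) + t * Max ((\<lambda>b. b \<bullet> z) ` {b\<in>P. b \<bullet> u = Max ((\<lambda>b. b \<bullet> u) ` P)})"
proof -
  define m where "m = Max ((\<lambda>b. b \<bullet> u) ` P)"
  define A where "A = {b\<in>P. b \<bullet> u = m}"
  define M where "M = Max ((\<lambda>b. b \<bullet> z) ` A)"
  have mle: "\<And>b. b \<in> P \<Longrightarrow> b \<bullet> u \<le> m" unfolding m_def using fin by auto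
  obtain b0 where b0: "b0 \<in> P" "b0 \<bullet> u = m"
    using Max_in[OF finite_imageI[OF fin] ] ne unfolding m_def by (metis (no_types, lifting) image_iff image_is_empty)
  have finA: "finite A" using fin unfolding A_def by auto
  have A_ne: "A \<noteq> {}" using b0 unfolding A_def by auto
  have Mge: "\<And>b. b \<in> A \<Longrightarrow> b \<bullet> z \<le> M" unfolding M_def using finA by auto
  obtain \<gamma> where g: "\<gamma> > 0" "\<forall>b\<in>P - A. b \<bullet> u \<le> m - \<gamma>"
  proof (cases "P - A = {}")
    case True then show ?thesis using that[of 1] by auto
  next
    case False
    define m' where "m' = Max ((\<lambda>b. b \<bullet> u) ` (P - A))"
    have "m' \<in> (\<lambda>b. b \<bullet> u) ` (P - A)" unfolding m'_def using False fin by (intro Max_in) auto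
    then obtain b1 where b1: "b1 \<in> P - A" "b1 \<bullet> u = m'" by auto
    have "m' < m" using b1 mle unfolding A_def by force
    moreover have "\<forall>b\<in>P - A. b \<bullet> u \<le> m'" unfolding m'_def using fin by auto
    ultimately show ?thesis using that[of "m - m'"] by auto
  qed
  define R where "R = (\<Sum>b\<in>P. \<bar>b \<bullet> z\<bar>)"
  have Rb: "\<And>b. b \<in> P \<Longrightarrow> \<bar>b \<bullet> z\<bar> \<le> R" unfolding R_def using fin
    by (intro member_le_sum) auto
  have R0: "R \<ge> 0" unfolding R_def by (intro sum_nonneg) auto
  have MR: "M \<ge> - R" using Mge[of b0] Rb[of b0] b0 unfolding A_def by force
  define \<delta> where "\<delta> = \<gamma> / (2 * R + 1)"
  have dpos: "\<delta> > 0" unfolding \<delta>_def using g R0 by auto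
  have "\<forall>t. 0 < t \<and> t < \<delta> \<longrightarrow> Max ((\<lambda>b. b \<bullet> (u + t *\<^sub>R z)) ` P) \<le> m + t * M"
  proof (intro allI impI)
    fix t assume t: "0 < t \<and> t < \<delta>"
    have "t * (2 * R + 1) < \<gamma>" using t R0 unfolding \<delta>_def by (simp add: less_divide_eq)
    hence tR: "2 * t * R < \<gamma>" using t by (simp add: algebra_simps)
    show "Max ((\<lambda>b. b \<bullet> (u + t *\<^sub>R z)) ` P) \<le> m + t * M"
    proof (subst Max_le_iff)
      show "finite ((\<lambda>b. b \<bullet> (u + t *\<^sub>R z)) ` P)" using fin by simp
      show "(\<lambda>b. b \<bullet> (u + t *\<^sub>R z)) ` P \<noteq> {}" using ne by simp
      show "\<forall>a\<in>(\<lambda>b. b \<bullet> (u + t *\<^sub>R z)) ` P. a \<le> m + t * M"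
      proof
        fix a assume "a \<in> (\<lambda>b. b \<bullet> (u + t *\<^sub>R z)) ` P"
        then obtain b where b: "b \<in> P" "a = b \<bullet> u + t * (b \<bullet> z)" by (auto simp: inner_add_right)
        show "a \<le> m + t * M"
        proof (cases "b \<in> A")
          case True
          then have "b \<bullet> u = m" unfolding A_def by auto
          moreover have "t * (b \<bullet> z) \<le> t * M" using Mge[OF True] t by (simp add: mult_left_mono)
          ultimately show ?thesis using b by simp
        next
          case False
          then have "b \<bullet> u \<le> m - \<gamma>" using g b by auto
          moreover have "t * (b \<bullet> z) \<le> t * R" using Rb[OF b(1)] t by (simp add: mult_left_mono abs_le_iff)
          moreover have "t * (- R) \<le> t * M" using MR t by (intro mult_left_mono) auto
          ultimately show ?thesis using b tR by linarith
        qed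
      qed
    qed
  qed
  then show ?thesis using dpos unfolding m_def M_def A_def by blast
qed



definition Aset :: "'a::finite set \<Rightarrow> real^'a \<Rightarrow> (real^'a) set" where
  "Aset e u = {b\<in>Pset e. b \<bullet> u = mE e u}"

definition Me :: "'a::finite set \<Rightarrow> real^'a \<Rightarrow> real^'a \<Rightarrow> real" where
  "Me e u z = Max ((\<lambda>b. b \<bullet> z) ` Aset e u)"

lemma mE_expand:
  "e \<noteq> {} \<Longrightarrow> \<exists>\<delta>>0. \<forall>t. 0 < t \<and> t < \<delta> \<longrightarrow> mE e (u + t *\<^sub>R z) \<le> mE e u + t * Me e u z"
proof -
  assume "e \<noteq> {}"
  hence "Pset e \<noteq> {}" using zero_Pset[of e] by auto
  from max_expand[OF Pset_finite this, of u z]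
  show ?thesis unfolding mE_def Me_def Aset_def .
qed

lemma Me_attained: "e \<noteq> {} \<Longrightarrow> \<exists>b\<in>Aset e u. b \<bullet> z = Me e u z"
proof -
  assume e: "e \<noteq> {}"
  have "Aset e u \<noteq> {}" using mE_attained[OF e] unfolding Aset_def by auto
  moreover have "finite (Aset e u)" using Pset_finite[of e] unfolding Aset_def by auto
  ultimately show ?thesis unfolding Me_def
    by (metis (no_types, lifting) Max_in finite_imageI image_iff image_is_empty)
qed

definition Psi :: "'a::finite set set \<Rightarrow> ('a set \<Rightarrow> real) \<Rightarrow> ('a \<Rightarrow> real) \<Rightarrow> real^'a \<Rightarrow> real \<Rightarrow> real^'a \<Rightarrow> real" where
  "Psi E w d g lam v = (\<Sum>x\<in>UNIV. d x * (v$x)^2 - 2 * g$x * v$x) + lam * (\<Sum>e\<in>E. w e * (mE e v)^2)"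

lemma min_exists:
  fixes d :: "'a::finite \<Rightarrow> real" and g :: "real^'a"
  assumes hE: "\<forall>e\<in>E. e \<noteq> {}" and hw: "\<forall>e\<in>E. w e > 0" and hd: "\<forall>x. d x > 0" and lam: "lam > 0"
  shows "\<exists>u. \<forall>v. Psi E w d g lam u \<le> Psi E w d g lam v"
proof -
  let ?\<Psi> = "Psi E w d g lam"
  have cont: "continuous_on UNIV ?\<Psi>" unfolding Psi_def
    using hE by (intro continuous_intros mE_cont) auto
  define dm where "dm = Min (range d)"
  have dm: "dm > 0" "\<And>x. dm \<le> d x" unfolding dm_def using hd by auto
  have lower: "?\<Psi> v \<ge> dm * (norm v)^2 - 2 * norm g * norm v" for v
  proof -
    have "(\<Sum>x\<in>UNIV. dm * (v$x)^2) \<le> (\<Sum>x\<in>UNIV. d x * (v$x)^2)"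
      using dm by (intro sum_mono) (simp add: mult_right_mono)
    moreover have "(\<Sum>x\<in>UNIV. dm * (v$x)^2) = dm * (norm v)^2"
    proof -
      have "(norm v)^2 = v \<bullet> v" by (rule power2_norm_eq_inner)
      also have "\<dots> = (\<Sum>x\<in>UNIV. (v$x)^2)" by (simp add: inner_vec_def power2_eq_square)
      finally have n2: "(norm v)^2 = (\<Sum>x\<in>UNIV. (v$x)^2)" .
      show ?thesis unfolding n2 sum_distrib_left by (rule sum.cong) auto
    qed
    moreover have "(\<Sum>x\<in>UNIV. 2 * g$x * v$x) \<le> 2 * (norm g * norm v)"
    proof -
      have "(\<Sum>x\<in>UNIV. 2 * g$x * v$x) = 2 * (g \<bullet> v)"
        by (simp add: inner_vec_def sum_distrib_left mult.assoc)
      thus ?thesis using norm_cauchy_schwarz[of g v] by linarith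
    qed
    moreover have "0 \<le> lam * (\<Sum>e\<in>E. w e * (mE e v)^2)"
      using lam hw by (intro mult_nonneg_nonneg sum_nonneg) auto
    ultimately show ?thesis unfolding Psi_def by (simp add: sum_subtractf)
  qed
  define R where "R = 2 * norm g / dm + 1"
  have "2 * norm g / dm \<ge> 0" using dm by simp
  hence R0: "R > 0" unfolding R_def by linarith
  have pos: "?\<Psi> v > 0" if "norm v > R" for v
  proof -
    have "dm * norm v > dm * R" using that dm by simp
    also have "dm * R = 2 * norm g + dm" unfolding R_def using dm by (simp add: field_simps)
    finally have f1: "dm * norm v - 2 * norm g > 0" using dm by simp
    have f2: "norm v > 0" using that R0 by linarith
    have "norm v * (dm * norm v - 2 * norm g) > 0" by (rule mult_pos_pos[OF f2 f1])
    hence "dm * (norm v)^2 - 2 * norm g * norm v > 0" by (simp add: power2_eq_square algebra_simps)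
    thus ?thesis using lower[of v] by linarith
  qed
  have "(\<Sum>e\<in>E. w e * (mE e 0)^2) = 0"
  proof (intro sum.neutral ballI)
    fix e assume e: "e \<in> E"
    show "w e * (mE e 0)^2 = 0" using mE_zero[OF bspec[OF hE e]] by simp
  qed
  hence P0: "?\<Psi> 0 = 0" unfolding Psi_def by simp
  have cne: "cball (0::real^'a) R \<noteq> {}" using R0 by simp
  have "\<exists>x\<in>cball 0 R. \<forall>y\<in>cball 0 R. ?\<Psi> x \<le> ?\<Psi> y"
    by (rule continuous_attains_inf[OF compact_cball cne continuous_on_subset[OF cont subset_UNIV]])
  then obtain u where u: "u \<in> cball 0 R" "\<forall>y\<in>cball 0 R. ?\<Psi> u \<le> ?\<Psi> y" by blast
  have "?\<Psi> u \<le> ?\<Psi> v" for v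
  proof (cases "v \<in> cball 0 R")
    case True then show ?thesis using u by auto
  next
    case False
    hence "norm v > R" by auto
    hence "?\<Psi> v > 0" by (rule pos)
    moreover have "?\<Psi> u \<le> ?\<Psi> 0" using u R0 by auto
    ultimately show ?thesis using P0 by linarith
  qed
  thus ?thesis by blast
qed

lemma var_ineq:
  fixes d :: "'a::finite \<Rightarrow> real" and g :: "real^'a"
  assumes hE: "\<forall>e\<in>E. e \<noteq> {}" and hw: "\<forall>e\<in>E. w e > 0" and hd: "\<forall>x. d x > 0" and lam: "lam > 0"
    and umin: "\<forall>v. Psi E w d g lam u \<le> Psi E w d g lam v"
  shows "0 \<le> (\<Sum>x\<in>UNIV. (d x * u$x - g$x) * z$x) + lam * (\<Sum>e\<in>E. w e * mE e u * Me e u z)"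
proof (rule ccontr)
  let ?\<Psi> = "Psi E w d g lam"
  define L where "L = (\<Sum>x\<in>UNIV. (d x * u$x - g$x) * z$x) + lam * (\<Sum>e\<in>E. w e * mE e u * Me e u z)"
  define K where "K = (\<Sum>x\<in>UNIV. d x * (z$x)^2) + lam * (\<Sum>e\<in>E. w e * (Me e u z)^2)"
  assume "\<not> 0 \<le> (\<Sum>x\<in>UNIV. (d x * u$x - g$x) * z$x) + lam * (\<Sum>e\<in>E. w e * mE e u * Me e u z)"
  hence Lneg: "L < 0" unfolding L_def by simp
  have hd0: "\<And>x. 0 \<le> d x" using hd less_imp_le by blast
  have hw0: "\<And>e. e \<in> E \<Longrightarrow> 0 \<le> w e" using hw less_imp_le by blast
  have K0: "K \<ge> 0" unfolding K_def using hd0 hw0 lam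
    by (intro add_nonneg_nonneg mult_nonneg_nonneg sum_nonneg) auto
  have "\<forall>e\<in>E. \<exists>\<delta>>0. \<forall>t. 0 < t \<and> t < \<delta> \<longrightarrow> mE e (u + t *\<^sub>R z) \<le> mE e u + t * Me e u z"
  proof
    fix e assume e: "e \<in> E"
    show "\<exists>\<delta>>0. \<forall>t. 0 < t \<and> t < \<delta> \<longrightarrow> mE e (u + t *\<^sub>R z) \<le> mE e u + t * Me e u z"
      by (rule mE_expand[OF bspec[OF hE e]])
  qed
  from bchoice[OF this] obtain de where de: "\<forall>e\<in>E. de e > 0 \<and> (\<forall>t. 0 < t \<and> t < de e \<longrightarrow> mE e (u + t *\<^sub>R z) \<le> mE e u + t * Me e u z)"
    by (elim exE)
  define \<delta> where "\<delta> = Min (insert 1 (de ` E))"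
  have dpos: "\<delta> > 0" unfolding \<delta>_def using de finite_E[of E] by (subst Min_gr_iff) auto
  have dle: "\<And>e. e \<in> E \<Longrightarrow> \<delta> \<le> de e" unfolding \<delta>_def using finite_E[of E] by (intro Min_le) auto
  have key: "?\<Psi> (u + t *\<^sub>R z) \<le> ?\<Psi> u + 2 * t * L + t^2 * K" if t: "0 < t" "t < \<delta>" for t
  proof -
    have sq: "w e * (mE e (u + t *\<^sub>R z))^2 \<le> w e * (mE e u + t * Me e u z)^2" if e: "e \<in> E" for e
    proof -
      have "mE e (u + t *\<^sub>R z) \<le> mE e u + t * Me e u z" using de e t dle[OF e] by auto
      moreover have "0 \<le> mE e (u + t *\<^sub>R z)" by (rule mE_nonneg[OF bspec[OF hE e]])
      ultimately have "(mE e (u + t *\<^sub>R z))^2 \<le> (mE e u + t * Me e u z)^2" by (rule power_mono)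
      thus ?thesis using hw e by (simp add: mult_left_mono)
    qed
    have S1: "(\<Sum>e\<in>E. w e * (mE e (u + t *\<^sub>R z))^2) \<le> (\<Sum>e\<in>E. w e * (mE e u + t * Me e u z)^2)"
      using sq by (rule sum_mono)
    have E1: "(\<Sum>e\<in>E. w e * (mE e u + t * Me e u z)^2) = (\<Sum>e\<in>E. w e * (mE e u)^2)
        + 2 * t * (\<Sum>e\<in>E. w e * mE e u * Me e u z) + t^2 * (\<Sum>e\<in>E. w e * (Me e u z)^2)"
    proof -
      have "(\<Sum>e\<in>E. w e * (mE e u + t * Me e u z)^2) = (\<Sum>e\<in>E. w e * (mE e u)^2
        + 2 * t * (w e * mE e u * Me e u z) + t^2 * (w e * (Me e u z)^2))"
        by (rule sum.cong) (auto simp: power2_eq_square algebra_simps)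
      thus ?thesis by (simp add: sum.distrib sum_distrib_left)
    qed
    have V1: "(\<Sum>x\<in>UNIV. d x * ((u + t *\<^sub>R z)$x)^2 - 2 * g$x * (u + t *\<^sub>R z)$x) =
       (\<Sum>x\<in>UNIV. d x * (u$x)^2 - 2 * g$x * u$x) + 2 * t * (\<Sum>x\<in>UNIV. (d x * u$x - g$x) * z$x)
       + t^2 * (\<Sum>x\<in>UNIV. d x * (z$x)^2)"
    proof -
      have "(\<Sum>x\<in>UNIV. d x * ((u + t *\<^sub>R z)$x)^2 - 2 * g$x * (u + t *\<^sub>R z)$x) =
        (\<Sum>x\<in>UNIV. (d x * (u$x)^2 - 2 * g$x * u$x) + 2 * t * ((d x * u$x - g$x) * z$x)
       + t^2 * (d x * (z$x)^2))"
        by (rule sum.cong) (auto simp: power2_eq_square algebra_simps)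
      thus ?thesis by (simp add: sum.distrib sum_distrib_left)
    qed
    have "?\<Psi> (u + t *\<^sub>R z) \<le> (\<Sum>x\<in>UNIV. d x * ((u + t *\<^sub>R z)$x)^2 - 2 * g$x * (u + t *\<^sub>R z)$x)
        + lam * (\<Sum>e\<in>E. w e * (mE e u + t * Me e u z)^2)"
      unfolding Psi_def using S1 lam by (simp add: mult_left_mono)
    also have "\<dots> = ?\<Psi> u + 2 * t * L + t^2 * K"
      unfolding V1 E1 Psi_def L_def K_def by (simp add: algebra_simps)
    finally show ?thesis .
  qed
  define t where "t = min (\<delta>/2) (- L / (2 * (K + 1)))"
  have c2: "2 * (K + 1) > 0" using K0 by simp
  have q: "- L / (2 * (K + 1)) > 0" using Lneg c2 by (intro divide_pos_pos) auto
  have tpos: "t > 0" unfolding t_def using dpos q by simp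
  have tlt: "t < \<delta>" unfolding t_def using dpos by linarith
  have "t \<le> - L / (2 * (K + 1))" unfolding t_def by linarith
  hence "t * (2 * (K + 1)) \<le> - L" using pos_le_divide_eq[OF c2, of t "- L"] by blast
  hence l1: "2 * (t * K) + 2 * t \<le> - L" by (simp add: algebra_simps)
  have tK0: "t * K \<ge> 0" using tpos K0 by simp
  have "2 * L + t * K < 0" using l1 tK0 tpos Lneg by linarith
  hence "t * (2 * L + t * K) < 0" by (rule mult_pos_neg[OF tpos])
  hence neg: "2 * t * L + t^2 * K < 0" by (simp add: power2_eq_square algebra_simps)
  have "?\<Psi> u \<le> ?\<Psi> (u + t *\<^sub>R z)" by (rule spec[OF umin])
  also have "\<dots> \<le> ?\<Psi> u + 2 * t * L + t^2 * K" by (rule key[OF tpos tlt])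
  finally show False using neg by linarith
qed



lemma Dinv_D: "(\<forall>x. hdeg E w x > 0) \<Longrightarrow> Dinv E w (\<chi> x. hdeg E w x * u$x) = u"
proof -
  assume h: "\<forall>x. hdeg E w x > 0"
  show ?thesis unfolding Dinv_def
  proof (rule vec_eq_iff[THEN iffD2], rule allI)
    fix i
    have "hdeg E w i \<noteq> 0" using h by (metis less_irrefl)
    thus "(\<chi> x. (\<chi> x. hdeg E w x * u$x) $ x / hdeg E w x) $ i = u $ i" by simp
  qed
qed

lemma resolvent_exists:
  assumes hE: "\<forall>e\<in>E. e \<noteq> {}" and hw: "\<forall>e\<in>E. w e > 0" and hd: "\<forall>x. hdeg E w x > 0" and lam: "lam > 0"
  shows "\<exists>G h. h \<in> hLap E w (Dinv E w G) \<and> g = G + lam *\<^sub>R h"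
proof -
  define d where "d = hdeg E w"
  have hd': "\<forall>x. d x > 0" using hd d_def by auto
  obtain u where umin: "\<forall>v. Psi E w d g lam u \<le> Psi E w d g lam v"
    using min_exists[OF hE hw hd' lam] by blast
  define p where "p = g - (\<chi> x. d x * u$x)"
  have vi: "p \<bullet> z \<le> lam * (\<Sum>e\<in>E. w e * mE e u * Me e u z)" for z
  proof -
    have "p \<bullet> z = (\<Sum>x\<in>UNIV. (g$x - d x * u$x) * z$x)" by (simp add: p_def inner_vec_def)
    also have "\<dots> = - (\<Sum>x\<in>UNIV. (d x * u$x - g$x) * z$x)"
      by (simp add: sum_negf[symmetric] algebra_simps)
    finally show ?thesis using var_ineq[OF hE hw hd' lam umin, of z] by linarith
  qed
  have mem: "(1/lam) *\<^sub>R p \<in> hLap E w u"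
  proof (rule ccontr)
    assume nm: "(1/lam) *\<^sub>R p \<notin> hLap E w u"
    have cc: "compact (hLap E w u)" "convex (hLap E w u)" using hLap_cc[OF hE] by auto
    obtain a \<beta> where ab: "a \<bullet> ((1/lam) *\<^sub>R p) < \<beta>" "\<forall>x\<in>hLap E w u. a \<bullet> x > \<beta>"
      using separating_hyperplane_closed_point[OF cc(2) compact_imp_closed[OF cc(1)] nm] by blast
    define z where "z = - a"
    have "\<forall>e\<in>E. \<exists>b. b \<in> Aset e u \<and> b \<bullet> z = Me e u z"
    proof
      fix e assume e: "e \<in> E"
      from Me_attained[OF bspec[OF hE e], of u z] obtain b where "b \<in> Aset e u" "b \<bullet> z = Me e u z" by blast
      thus "\<exists>b. b \<in> Aset e u \<and> b \<bullet> z = Me e u z" by blast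
    qed
    from bchoice[OF this] obtain bs where bs: "\<forall>e\<in>E. bs e \<in> Aset e u \<and> bs e \<bullet> z = Me e u z" by (elim exE)
    define k where "k = (\<Sum>e\<in>E. w e *\<^sub>R ((bs e \<bullet> u) *\<^sub>R bs e))"
    have "\<forall>e\<in>E. bs e \<in> argmaxB e u"
    proof
      fix e assume e: "e \<in> E"
      have "bs e \<in> Pset e" "bs e \<bullet> u = mE e u" using bspec[OF bs e] unfolding Aset_def by auto
      thus "bs e \<in> argmaxB e u" by (rule Pset_argmaxB[OF bspec[OF hE e]])
    qed
    hence kin: "k \<in> hLap E w u" unfolding k_def by (rule hLapI)
    have "k \<bullet> z = (\<Sum>e\<in>E. w e * ((bs e \<bullet> u) * (bs e \<bullet> z)))"
      unfolding k_def by (simp add: inner_sum_left mult.assoc)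
    also have "\<dots> = (\<Sum>e\<in>E. w e * mE e u * Me e u z)"
      using bs unfolding Aset_def by (intro sum.cong) auto
    finally have kz: "k \<bullet> z = (\<Sum>e\<in>E. w e * mE e u * Me e u z)" .
    have "a \<bullet> k > \<beta>" using ab(2) kin by blast
    hence "k \<bullet> z < - \<beta>" unfolding z_def by (simp add: inner_commute)
    moreover have "((1/lam) *\<^sub>R p) \<bullet> z > - \<beta>" using ab(1) unfolding z_def by (simp add: inner_commute)
    moreover have "((1/lam) *\<^sub>R p) \<bullet> z = (p \<bullet> z) / lam" by simp
    moreover have "(p \<bullet> z) / lam \<le> (\<Sum>e\<in>E. w e * mE e u * Me e u z)"
      using vi[of z] lam by (simp add: divide_le_eq mult.commute)
    ultimately show False using kz by linarith
  qed
  define G where "G = (\<chi> x. d x * u$x)"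
  have "Dinv E w G = u" unfolding G_def d_def using Dinv_D[OF hd] by simp
  moreover have "g = G + lam *\<^sub>R ((1/lam) *\<^sub>R p)" using lam unfolding G_def p_def by simp
  ultimately show ?thesis using mem by blast
qed

lemma resolvent_unique:
  assumes hE: "\<forall>e\<in>E. e \<noteq> {}" and hw: "\<forall>e\<in>E. w e > 0" and hd: "\<forall>x. hdeg E w x > 0" and lam: "lam > 0"
    and h1: "h1 \<in> hLap E w (Dinv E w G1)" and h2: "h2 \<in> hLap E w (Dinv E w G2)"
    and eq: "G1 + lam *\<^sub>R h1 = G2 + lam *\<^sub>R h2"
  shows "G1 = G2"
proof -
  have comp: "G1$x - G2$x = lam * (h2$x - h1$x)" for x
    using arg_cong[OF eq, of "\<lambda>v. v$x"] by (simp add: algebra_simps)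
  have "0 \<le> (h1 - h2) \<bullet> (Dinv E w G1 - Dinv E w G2)" by (rule hLap_mono[OF hE hw h1 h2])
  also have "\<dots> = (\<Sum>x\<in>UNIV. (h1$x - h2$x) * ((G1$x - G2$x) / hdeg E w x))"
    by (simp add: inner_vec_def Dinv_def diff_divide_distrib)
  also have "\<dots> = - lam * (\<Sum>x\<in>UNIV. (h1$x - h2$x)^2 / hdeg E w x)"
    unfolding comp sum_distrib_left by (rule sum.cong) (auto simp: power2_eq_square algebra_simps)
  finally have "(\<Sum>x\<in>UNIV. (h1$x - h2$x)^2 / hdeg E w x) \<le> 0" using lam
    by (simp add: mult_le_0_iff)
  moreover have nn: "\<forall>x\<in>UNIV. 0 \<le> (h1$x - h2$x)^2 / hdeg E w x" using hd by (simp add: less_imp_le)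
  moreover have "(\<Sum>x\<in>UNIV. (h1$x - h2$x)^2 / hdeg E w x) \<ge> 0"
    using nn by (intro sum_nonneg) auto
  ultimately have "(\<Sum>x\<in>UNIV. (h1$x - h2$x)^2 / hdeg E w x) = 0" by linarith
  hence "\<forall>x\<in>UNIV. (h1$x - h2$x)^2 / hdeg E w x = 0" using sum_nonneg_eq_0_iff[of UNIV "\<lambda>x. (h1$x - h2$x)^2 / hdeg E w x"] nn by simp
  hence z: "\<And>x. (h1$x - h2$x)^2 / hdeg E w x = 0" by simp
  have "\<forall>x. h1$x = h2$x"
  proof
    fix x
    have "hdeg E w x \<noteq> 0" using hd by (metis less_irrefl)
    thus "h1$x = h2$x" using z[of x] by simp
  qed
  thus ?thesis using comp by (simp add: vec_eq_iff)
qed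

lemma resolvent_eq:
  assumes hE: "\<forall>e\<in>E. e \<noteq> {}" and hw: "\<forall>e\<in>E. w e > 0" and hd: "\<forall>x. hdeg E w x > 0" and lam: "lam > 0"
    and h: "h \<in> hLap E w (Dinv E w G)" and g: "g = G + lam *\<^sub>R h"
  shows "resolvent E w lam g = G"
  unfolding resolvent_def
proof (rule the_equality)
  show "\<exists>h\<in>nLap E w G. g = G + lam *\<^sub>R h" using h g unfolding nLap_def by blast
next
  fix G' assume "\<exists>h\<in>nLap E w G'. g = G' + lam *\<^sub>R h"
  then obtain h' where h': "h' \<in> hLap E w (Dinv E w G')" "g = G' + lam *\<^sub>R h'" unfolding nLap_def by blast
  show "G' = G" using resolvent_unique[OF hE hw hd lam h'(1) h] h'(2) g by simp
qed

lemma resolvent_spec: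
  assumes hE: "\<forall>e\<in>E. e \<noteq> {}" and hw: "\<forall>e\<in>E. w e > 0" and hd: "\<forall>x. hdeg E w x > 0" and lam: "lam > 0"
  shows "\<exists>h. h \<in> hLap E w (Dinv E w (resolvent E w lam g)) \<and> g = resolvent E w lam g + lam *\<^sub>R h"
proof -
  obtain G h where Gh: "h \<in> hLap E w (Dinv E w G)" "g = G + lam *\<^sub>R h"
    using resolvent_exists[OF hE hw hd lam] by blast
  have "resolvent E w lam g = G" by (rule resolvent_eq[OF hE hw hd lam Gh])
  thus ?thesis using Gh by blast
qed



lemma winner_delta: "winner E w G (delta x - delta y) = G$x / hdeg E w x - G$y / hdeg E w y"
proof -
  have "winner E w G (delta x - delta y) = (\<Sum>z\<in>UNIV. (if z = x then G$z / hdeg E w z else 0) - (if z = y then G$z / hdeg E w z else 0))"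
    unfolding winner_def by (rule sum.cong) (auto simp: delta_def)
  also have "\<dots> = G$x / hdeg E w x - G$y / hdeg E w y" by (simp add: sum_subtractf)
  finally show ?thesis .
qed

lemma Dinv_scale: "Dinv E w (a *\<^sub>R v) = a *\<^sub>R Dinv E w v"
  unfolding Dinv_def by (simp add: vec_eq_iff)

lemma nLap0_mem:
  assumes hE: "\<forall>e\<in>E. e \<noteq> {}" and hd: "\<forall>x. hdeg E w x > 0"
  shows "nLap0 E w f \<in> nLap E w f"
proof -
  define S where "S = nLap E w f"
  define W where "W = (\<lambda>v. winner E w v v)"
  have cc: "compact S" "convex S" using hLap_cc[OF hE] unfolding S_def nLap_def by auto
  have ne: "S \<noteq> {}" using hLap_ne[OF hE] unfolding S_def nLap_def by auto
  have dnz: "\<And>x. hdeg E w x \<noteq> 0" using hd by (metis less_irrefl)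
  have cont: "continuous_on S W" unfolding W_def winner_def by (intro continuous_intros) (simp add: dnz)
  obtain g0 where g0: "g0 \<in> S" "\<forall>y\<in>S. W g0 \<le> W y" using continuous_attains_inf[OF cc(1) ne cont] by blast
  have wn: "wnorm E w a \<le> wnorm E w b \<longleftrightarrow> W a \<le> W b" for a b unfolding wnorm_def W_def by simp
  have Wnn: "\<forall>x\<in>UNIV. 0 \<le> v$x * v$x / hdeg E w x" for v using hd by (simp add: less_imp_le)
  have W0: "W v \<ge> 0" for v unfolding W_def winner_def using Wnn[of v] by (intro sum_nonneg) auto
  have uniq: "g = g0" if g: "g \<in> S" "\<forall>y\<in>S. W g \<le> W y" for g
  proof (rule ccontr)
    assume neq: "g \<noteq> g0"
    have "W (g - g0) \<noteq> 0"
    proof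
      assume "W (g - g0) = 0"
      hence "\<forall>x\<in>UNIV. (g - g0)$x * (g - g0)$x / hdeg E w x = 0"
        using sum_nonneg_eq_0_iff[of UNIV "\<lambda>x. (g - g0)$x * (g - g0)$x / hdeg E w x"] Wnn[of "g - g0"]
        unfolding W_def winner_def by simp
      hence z: "\<And>x. (g - g0)$x * (g - g0)$x / hdeg E w x = 0" by simp
      have "\<forall>x. (g - g0)$x = 0"
      proof
        fix x
        have "hdeg E w x \<noteq> 0" using hd by (metis less_irrefl)
        thus "(g - g0)$x = 0" using z[of x] by simp
      qed
      thus False using neq by (simp add: vec_eq_iff)
    qed
    hence pos: "W (g - g0) > 0" using W0[of "g - g0"] by linarith
    define m where "m = (1/2) *\<^sub>R g + (1/2) *\<^sub>R g0"
    have mS: "m \<in> S" using cc(2) g(1) g0(1) unfolding m_def convex_def by auto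
    have e1: "W m = (W g + W g0) / 2 - W (g - g0) / 4"
    proof -
      have "W m = (\<Sum>x\<in>UNIV. (g$x * g$x / hdeg E w x + g0$x * g0$x / hdeg E w x) / 2 - (g - g0)$x * (g - g0)$x / hdeg E w x / 4)"
        unfolding W_def winner_def m_def by (rule sum.cong) (auto simp: field_simps dnz power2_eq_square)
      thus ?thesis unfolding W_def winner_def by (simp only: sum_subtractf sum_divide_distrib[symmetric] sum.distrib)
    qed
    have e2: "W g = W g0" using g g0 by (meson order_antisym)
    have "W m = W g0 - W (g - g0) / 4" unfolding e1 e2 by simp
    hence "W m < W g0" using pos by simp
    thus False using g0(2) mS by fastforce
  qed
  have "nLap0 E w f = g0" unfolding nLap0_def S_def[symmetric]
  proof (rule the_equality)
    show "g0 \<in> S \<and> (\<forall>h\<in>S. wnorm E w g0 \<le> wnorm E w h)" using g0 wn by auto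
  next
    fix g assume "g \<in> S \<and> (\<forall>h\<in>S. wnorm E w g \<le> wnorm E w h)"
    thus "g = g0" using uniq wn by auto
  qed
  thus ?thesis using g0 S_def by simp
qed

lemma bound_shift:
  assumes hw: "\<forall>e\<in>E. w e > 0" and hd: "\<forall>x. hdeg E w x > 0" and lam: "lam \<ge> 0"
    and h: "h \<in> hLap E w (Dinv E w G)" and g: "g = G + lam *\<^sub>R h"
  shows "(\<Sum>x\<in>UNIV. (G$x - c * hdeg E w x)^2 / hdeg E w x) \<le> (\<Sum>x\<in>UNIV. (g$x - c * hdeg E w x)^2 / hdeg E w x)"
proof -
  let ?d = "hdeg E w"
  have dnz: "\<And>x. ?d x \<noteq> 0" using hd by (metis less_irrefl)
  define a where "a x = G$x - c * ?d x" for x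
  have "(\<Sum>x\<in>UNIV. a x * h$x / ?d x) = h \<bullet> Dinv E w G - c * (h \<bullet> (\<chi> i. 1))"
  proof -
    have "(\<Sum>x\<in>UNIV. a x * h$x / ?d x) = (\<Sum>x\<in>UNIV. h$x * (G$x / ?d x) - c * (h$x * 1))"
      unfolding a_def by (intro sum.cong) (auto simp: field_simps dnz)
    thus ?thesis by (simp add: inner_vec_def Dinv_def sum_subtractf sum_distrib_left)
  qed
  also have "\<dots> \<ge> 0" using hLap_self[OF hw h] hLap_sum0[OF h] by simp
  finally have cross: "(\<Sum>x\<in>UNIV. a x * h$x / ?d x) \<ge> 0" .
  have "(\<Sum>x\<in>UNIV. (g$x - c * ?d x)^2 / ?d x) = (\<Sum>x\<in>UNIV. a x ^2 / ?d x + 2 * lam * (a x * h$x / ?d x) + lam^2 * ((h$x)^2 / ?d x))"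
    unfolding g a_def by (intro sum.cong) (auto simp: power2_eq_square field_simps dnz)
  also have "\<dots> = (\<Sum>x\<in>UNIV. a x ^2 / ?d x) + 2 * lam * (\<Sum>x\<in>UNIV. a x * h$x / ?d x) + lam^2 * (\<Sum>x\<in>UNIV. (h$x)^2 / ?d x)"
    by (simp add: sum.distrib sum_distrib_left)
  also have "\<dots> \<ge> (\<Sum>x\<in>UNIV. a x ^2 / ?d x)"
  proof -
    have "0 \<le> 2 * lam * (\<Sum>x\<in>UNIV. a x * h$x / ?d x)" using lam cross by simp
    moreover have "0 \<le> lam^2 * (\<Sum>x\<in>UNIV. (h$x)^2 / ?d x)" using hd
      by (intro mult_nonneg_nonneg sum_nonneg) (auto simp: less_imp_le)
    ultimately show ?thesis by linarith
  qed
  finally show ?thesis unfolding a_def .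
qed

lemma hdist_pos:
  assumes "hconnected E" "x \<noteq> y"
  shows "hdist E x y > 0"
proof -
  obtain n where n: "(hadj E ^^ n) x y" using assms(1) unfolding hconnected_def by blast
  have "(hadj E ^^ hdist E x y) x y" unfolding hdist_def using n by (rule LeastI)
  thus ?thesis using assms(2) by (cases "hdist E x y") auto
qed



lemma le_sq: "(t::real) \<le> 1 + t^2"
proof -
  have "0 \<le> (t - 1)^2" by simp
  hence "2 * t \<le> t^2 + 1" by (simp add: power2_eq_square algebra_simps)
  moreover have "0 \<le> t^2" by simp
  ultimately show ?thesis by linarith
qed

lemma KD_bdd:
  assumes hE: "\<forall>e\<in>E. e \<noteq> {}" and hw: "\<forall>e\<in>E. w e > 0" and hd: "\<forall>x. hdeg E w x > 0" and lam: "lam > 0"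
  shows "bdd_above {winner E w (resolvent E w lam f) (delta x - delta y) | f. wLip1 E w f}"
proof -
  let ?d = "hdeg E w"
  define B where "B = (\<Sum>z\<in>UNIV. ?d z * (real (hdist E z x))^2)"
  have pt: "(J$v / ?d v - cc)^2 \<le> B / ?d v"
    if Js: "(\<Sum>z\<in>UNIV. (J$z - cc * ?d z)^2 / ?d z) \<le> B" for J cc v
  proof -
    have "(J$v - cc * ?d v)^2 / ?d v \<le> (\<Sum>z\<in>UNIV. (J$z - cc * ?d z)^2 / ?d z)"
      using hd by (intro member_le_sum) (auto simp: less_imp_le)
    hence a: "(J$v - cc * ?d v)^2 / ?d v \<le> B" using Js by linarith
    have "(J$v / ?d v - cc)^2 = ((J$v - cc * ?d v)^2 / ?d v) / ?d v"
      using hd[rule_format, of v] by (simp add: power2_eq_square field_simps less_imp_neq[symmetric])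
    also have "\<dots> \<le> B / ?d v" by (rule divide_right_mono[OF a less_imp_le[OF hd[rule_format, of v]]])
    finally show ?thesis .
  qed
  show ?thesis unfolding bdd_above_def
  proof (intro exI[of _ "2 + B / ?d x + B / ?d y"] ballI)
    fix s assume "s \<in> {winner E w (resolvent E w lam f) (delta x - delta y) | f. wLip1 E w f}"
    then obtain g where g: "wLip1 E w g" "s = winner E w (resolvent E w lam g) (delta x - delta y)" by blast
    define J where "J = resolvent E w lam g"
    obtain h where h: "h \<in> hLap E w (Dinv E w J)" "g = J + lam *\<^sub>R h"
      using resolvent_spec[OF hE hw hd lam, of g] unfolding J_def by blast
    define cc where "cc = g$x / ?d x"
    have "(\<Sum>z\<in>UNIV. (J$z - cc * ?d z)^2 / ?d z) \<le> (\<Sum>z\<in>UNIV. (g$z - cc * ?d z)^2 / ?d z)"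
      using bound_shift[OF hw hd _ h(1) h(2)] lam by simp
    also have "\<dots> \<le> B" unfolding B_def
    proof (rule sum_mono)
      fix z :: 'a
      have dz: "?d z > 0" using hd by blast
      have "\<bar>g$z / ?d z - cc\<bar> \<le> real (hdist E z x)" using g(1) unfolding wLip1_def cc_def by blast
      hence "(g$z / ?d z - cc)^2 \<le> (real (hdist E z x))^2"
        by (metis abs_ge_zero power2_abs power_mono)
      hence "?d z * (g$z / ?d z - cc)^2 \<le> ?d z * (real (hdist E z x))^2" using dz by simp
      moreover have "(g$z - cc * ?d z)^2 / ?d z = ?d z * (g$z / ?d z - cc)^2"
        using dz by (simp add: power2_eq_square field_simps less_imp_neq[symmetric])
      ultimately show "(g$z - cc * ?d z)^2 / ?d z \<le> ?d z * (real (hdist E z x))^2" by simp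
    qed
    finally have Js: "(\<Sum>z\<in>UNIV. (J$z - cc * ?d z)^2 / ?d z) \<le> B" .
    have "s = (J$x / ?d x - cc) - (J$y / ?d y - cc)" using g(2) unfolding J_def winner_delta by simp
    also have "\<dots> \<le> (1 + (J$x / ?d x - cc)^2) + (1 + (J$y / ?d y - cc)^2)"
      using le_sq[of "J$x / ?d x - cc"] le_sq[of "- (J$y / ?d y - cc)", unfolded power2_minus] by linarith
    also have "\<dots> \<le> 2 + B / ?d x + B / ?d y" using pt[OF Js, of x] pt[OF Js, of y] by simp
    finally show "s \<le> 2 + B / ?d x + B / ?d y" .
  qed
qed



lemma hadj_sym: "hadj E x y = hadj E y x"
  unfolding hadj_def by blast

lemma relpow_hadj_sym: "(hadj E ^^ n) x y \<Longrightarrow> (hadj E ^^ n) y x"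
proof (induction n arbitrary: x y)
  case 0
  then show ?case by simp
next
  case (Suc n)
  from Suc.prems obtain u where u: "(hadj E ^^ n) x u" "hadj E u y" by (rule relpowp_Suc_E)
  have "(hadj E ^^ n) u x" by (rule Suc.IH[OF u(1)])
  moreover have "hadj E y u" using u(2) hadj_sym by metis
  ultimately show ?case by (intro relpowp_Suc_I2)
qed

lemma hdist_sym: "hdist E x y = hdist E y x"
proof -
  have "(\<lambda>n. (hadj E ^^ n) x y) = (\<lambda>n. (hadj E ^^ n) y x)"
  proof (rule ext)
    fix n
    show "(hadj E ^^ n) x y = (hadj E ^^ n) y x"
      using relpow_hadj_sym[of n E x y] relpow_hadj_sym[of n E y x] by blast
  qed
  thus ?thesis unfolding hdist_def by simp
qed

theorem mainTheorem14:
  fixes E :: "'a::finite set set" and w :: "'a set \<Rightarrow> real"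
    and f :: "real^'a" and \<mu> :: real
  assumes "CARD('a) \<ge> 2"
    and "\<forall>e\<in>E. e \<noteq> {}"
    and "\<forall>e\<in>E. w e > 0"
    and "hconnected E"
    and "\<forall>x. hdeg E w x > 0"
    and "\<mu> > 0"
    and "f \<noteq> 0"
    and "nLap0 E w f = \<mu> *\<^sub>R f"
  shows "kappa_bar0 E w \<le> ereal \<mu>"
proof -
  have hE: "\<forall>e\<in>E. e \<noteq> {}" and hw: "\<forall>e\<in>E. w e > 0" and hc: "hconnected E"
    and hd: "\<forall>x. hdeg E w x > 0" and mu: "\<mu> > 0" and f0: "f \<noteq> 0" and eig: "nLap0 E w f = \<mu> *\<^sub>R f"
    using assms by auto
  let ?d = "hdeg E w"
  define F where "F z = f$z / ?d z" for z
  have eigm: "\<mu> *\<^sub>R f \<in> hLap E w (Dinv E w f)"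
    using nLap0_mem[OF hE hd, of f] eig unfolding nLap_def by simp
  have "\<exists>x y. F x - F y > 0"
  proof (rule ccontr)
    assume "\<not> (\<exists>x y. F x - F y > 0)"
    hence "\<forall>x y. F x \<le> F y" by (metis diff_gt_0_iff_gt not_le)
    hence eqF: "\<forall>x y. F x = F y" by (meson order_antisym)
    obtain x0 :: 'a where True by blast
    have "Dinv E w f = F x0 *\<^sub>R (\<chi> i. 1)"
      unfolding Dinv_def F_def[symmetric] using eqF by (simp add: vec_eq_iff)
    hence "\<mu> *\<^sub>R f = 0" using hLap_const eigm by metis
    thus False using mu f0 by simp
  qed
  then obtain x1 y1 where xy1: "F x1 - F y1 > 0" by blast
  define T where "T = {p::'a\<times>'a. fst p \<noteq> snd p}"
  define \<rho> where "\<rho> p = (F (fst p) - F (snd p)) / real (hdist E (fst p) (snd p))" for p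
  define r where "r = Max (\<rho> ` T)"
  have finT: "finite T" by simp
  have x1T: "(x1, y1) \<in> T" unfolding T_def using xy1 by auto
  have "\<rho> (x1, y1) > 0" unfolding \<rho>_def using xy1 hdist_pos[OF hc] x1T unfolding T_def by simp
  moreover have "\<rho> (x1, y1) \<le> r" unfolding r_def using finT x1T by simp
  ultimately have rpos: "r > 0" by linarith
  have "r \<in> \<rho> ` T" unfolding r_def using finT x1T by (intro Max_in) auto
  then obtain p0 where p0: "p0 \<in> T" "\<rho> p0 = r" by auto
  define x0 where "x0 = fst p0"
  define y0 where "y0 = snd p0"
  have xy0: "x0 \<noteq> y0" using p0 unfolding T_def x0_def y0_def by auto
  have hd0: "real (hdist E x0 y0) > 0" using hdist_pos[OF hc xy0] by simp
  have req: "F x0 - F y0 = r * real (hdist E x0 y0)"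
    using p0(2) hd0 unfolding \<rho>_def x0_def y0_def by (simp add: field_simps)
  have rle: "F x - F y \<le> r * real (hdist E x y)" if "x \<noteq> y" for x y
  proof -
    have "(x, y) \<in> T" unfolding T_def using that by simp
    hence "\<rho> (x, y) \<le> r" unfolding r_def using finT by simp
    moreover have "real (hdist E x y) > 0" using hdist_pos[OF hc that] by simp
    ultimately show ?thesis unfolding \<rho>_def by (simp add: pos_divide_le_eq mult.commute)
  qed
  define c where "c = 1 / r"
  have cpos: "c > 0" unfolding c_def using rpos by simp
  define cf where "cf = c *\<^sub>R f"
  have cfF: "cf$z / ?d z = c * F z" for z unfolding cf_def F_def by simp
  have lip: "wLip1 E w cf" unfolding wLip1_def
  proof (intro allI)
    fix x y
    show "\<bar>cf$x / ?d x - cf$y / ?d y\<bar> \<le> real (hdist E x y)"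
    proof (cases "x = y")
      case True then show ?thesis by simp
    next
      case False
      have "F x - F y \<le> r * real (hdist E x y)" "F y - F x \<le> r * real (hdist E x y)"
        using rle[OF False] rle[of y x] False hdist_sym[of E x y] by auto
      hence "\<bar>F x - F y\<bar> \<le> r * real (hdist E x y)" by simp
      hence "c * \<bar>F x - F y\<bar> \<le> c * (r * real (hdist E x y))" using cpos by (simp add: mult_left_mono)
      also have "\<dots> = real (hdist E x y)" unfolding c_def using rpos by simp
      finally show ?thesis unfolding cfF using cpos by (simp add: abs_mult right_diff_distrib[symmetric])
    qed
  qed
  have eigc: "\<mu> *\<^sub>R cf \<in> hLap E w (Dinv E w cf)"
    using hLap_scale[OF cpos eigm] unfolding cf_def Dinv_scale by (simp add: mult.commute)
  have ev: "ereal (kappa E w lam x0 y0 / lam) \<le> ereal \<mu>" if lam: "lam > 0" for lam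
  proof -
    have lm: "lam * \<mu> > 0" using lam mu by simp
    hence den: "1 + lam * \<mu> > 0" by linarith
    define s where "s = 1 / (1 + lam * \<mu>)"
    have spos: "s > 0" unfolding s_def using den by simp
    have s1: "s * (1 + lam * \<mu>) = 1" unfolding s_def using den by simp
    define G where "G = s *\<^sub>R cf"
    define h where "h = s *\<^sub>R (\<mu> *\<^sub>R cf)"
    have hG: "h \<in> hLap E w (Dinv E w G)"
      using hLap_scale[OF spos eigc] unfolding G_def h_def Dinv_scale .
    have "G + lam *\<^sub>R h = (s + lam * (s * \<mu>)) *\<^sub>R cf"
      unfolding G_def h_def by (simp add: scaleR_add_left)
    also have "s + lam * (s * \<mu>) = s * (1 + lam * \<mu>)" by (simp add: algebra_simps)
    also have "\<dots> = 1" by (rule s1)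
    finally have gG: "cf = G + lam *\<^sub>R h" by simp
    have resG: "resolvent E w lam cf = G" by (rule resolvent_eq[OF hE hw hd lam hG gG])
    have val: "winner E w (resolvent E w lam cf) (delta x0 - delta y0) = s * real (hdist E x0 y0)"
    proof -
      have "winner E w (resolvent E w lam cf) (delta x0 - delta y0) = s * (c * (F x0 - F y0))"
      proof -
        have e: "(s *\<^sub>R cf)$z / ?d z = s * (c * F z)" for z
        proof -
          have "(s *\<^sub>R cf)$z / ?d z = s * (cf$z / ?d z)" by simp
          also have "\<dots> = s * (c * F z)" by (simp only: cfF)
          finally show ?thesis .
        qed
        show ?thesis unfolding resG winner_delta G_def e by (simp add: algebra_simps)
      qed
      also have "\<dots> = s * real (hdist E x0 y0)" unfolding req c_def using rpos by simp
      finally show ?thesis .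
    qed
    have mem: "s * real (hdist E x0 y0) \<in> {winner E w (resolvent E w lam f) (delta x0 - delta y0) | f. wLip1 E w f}"
      unfolding mem_Collect_eq by (intro exI[of _ cf] conjI) (simp_all add: val lip)
    have "s * real (hdist E x0 y0) \<le> KD E w lam x0 y0"
      unfolding KD_def by (rule cSup_upper[OF mem KD_bdd[OF hE hw hd lam]])
    hence "s \<le> KD E w lam x0 y0 / real (hdist E x0 y0)" using hd0 by (simp add: pos_le_divide_eq)
    hence k: "kappa E w lam x0 y0 \<le> 1 - s" unfolding kappa_def by simp
    have "1 - s = s * (1 + lam * \<mu>) - s" using s1 by simp
    also have "\<dots> = lam * (s * \<mu>)" by (simp add: algebra_simps)
    finally have "kappa E w lam x0 y0 \<le> lam * (s * \<mu>)" using k by simp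
    hence "kappa E w lam x0 y0 / lam \<le> lam * (s * \<mu>) / lam"
      by (rule divide_right_mono) (use lam in simp)
    also have "\<dots> = s * \<mu>" using lam by simp
    also have "\<dots> \<le> \<mu>"
    proof -
      have "s = s * 1" by simp
      also have "\<dots> \<le> s * (1 + lam * \<mu>)" using spos lm by (intro mult_left_mono) auto
      finally have "s \<le> 1" using s1 by simp
      thus ?thesis using mu by (simp add: mult_left_le_one_le)
    qed
    finally show ?thesis by simp
  qed
  have evt: "eventually (\<lambda>lam. ereal (kappa E w lam x0 y0 / lam) \<le> ereal \<mu>) (at_right (0::real))"
    by (rule eventually_mono[OF eventually_at_right_less]) (rule ev)
  have "kappa_bar E w x0 y0 \<le> ereal \<mu>"
    unfolding kappa_bar_def by (rule Limsup_bounded[OF evt])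
  moreover have "kappa_bar0 E w \<le> kappa_bar E w x0 y0"
  proof -
    have "(x0, y0) \<in> {(x, y). x \<noteq> y}" using xy0 by simp
    from INF_lower[OF this, of "\<lambda>p. kappa_bar E w (fst p) (snd p)"]
    show ?thesis unfolding kappa_bar0_def by simp
  qed
  ultimately show ?thesis by simp
qed


end
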